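(* Let $\mathrm G^S=(\mathrm V,\mathrm E^S)$ be a fixed bidirectional connected graph with constant weights $a_{ij}^S=a_{ji}^S>0$, and suppose $\mathrm{rank}(\mathbf H)=m$. For $K>0$ let $\mathcal Z_K=\{\mathbf x\in(\mathbb R^m)^N:\nabla\mathcal D_K(\mathbf x)=0\}$. Then (i) $\mathcal Z_K$ is a singleton for every $K>0$ (so every trajectory of the "consensus + projection" flow on $\mathrm G^S$ converges to a single point); and (ii) for every $\kappa_0>0$ the set $\bigcup_{K>\kappa_0}\mathcal Z_K$ is bounded.
   Context: $\mathbf H\in\mathbb R^{N\times m}$ has rows $\mathbf h_1^T,\dots,\mathbf h_N^T$ with $\|\mathbf h_i\|=1$, $\mathbf z=(z_1,\dots,z_N)^T$; $\mathcal A_i=\{\mathbf y\in\mathbb R^m:\mathbf h_i^T\mathbf y=z_i\}$, $\|\mathbf v\|_{\mathcal A_i}$ the Euclidean distance from $\mathbf v$ to $\mathcal A_i$. $\mathrm V=\{1,\dots,N\}$; bidirectional means $(i,j)\in\mathrm E^S\iff(j,i)\in\mathrm E^S$; $\mathrm N_i=\{j:(j,i)\in\mathrm E^S\}$. $\mathcal D_K(\mathbf x)=\frac12\sum_{i=1}^N\|\mathbf x_i\|_{\mathcal A_i}^2+\frac K2\sum_{\{i,j\}\in\mathrm E^S}a_{ij}^S\|\mathbf x_j-\mathbf x_i\|^2$, the second sum over unordered edges; the "consensus + projection" flow $\dot{\mathbf x}_i=K\sum_{j\in\mathrm N_i}a_{ij}^S(\mathbf x_j-\mathbf x_i)+\mathcal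 P_{\mathcal A_i}(\mathbf x_i)-\mathbf x_i$ equals $\dot{\mathbf x}=-\nabla\mathcal D_K(\mathbf x)$, where $\mathcal P_{\mathcal A_i}(\mathbf y)=(I-\mathbf h_i\mathbf h_i^T)\mathbf y+z_i\mathbf h_i$. *)

theory Defs
  imports "HOL-Analysis.Analysis"
begin

text \<open>Agents are indexed by a finite type 'n (V = UNIV, N = CARD('n));
  the ambient space R^m is real^'m (m = CARD('m)).
  A state x in (R^m)^N is an element of real^'m^'n, x $ i being agent i's estimate.\<close>

definition hyperplane :: "(real^'m) \<Rightarrow> real \<Rightarrow> (real^'m) set" where
  "hyperplane hi zi = {y. hi \<bullet> y = zi}"

text \<open>The sum over unordered edges {i,j} of the symmetric edge set E is written as
  one half of the sum over ordered pairs (i,j) in E (each unordered edge appears twice,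
  a self-loop would contribute 0 either way).\<close>
definition DK :: "real \<Rightarrow> ('n::finite \<Rightarrow> 'n \<Rightarrow> real) \<Rightarrow> ('n \<times> 'n) set
    \<Rightarrow> ('n \<Rightarrow> real^'m) \<Rightarrow> ('n \<Rightarrow> real) \<Rightarrow> real^'m^'n \<Rightarrow> real" where
  "DK K a E h z x =
     (1/2) * (\<Sum>i\<in>UNIV. (infdist (x $ i) (hyperplane (h i) (z i)))\<^sup>2)
     + (K/2) * ((1/2) * (\<Sum>(i,j)\<in>E. a i j * (norm (x $ j - x $ i))\<^sup>2))"

definition ZK :: "real \<Rightarrow> ('n::finite \<Rightarrow> 'n \<Rightarrow> real) \<Rightarrow> ('n \<times> 'n) set
    \<Rightarrow> ('n \<Rightarrow> real^'m) \<Rightarrow> ('n \<Rightarrow> real) \<Rightarrow> (real^'m^'n) set" where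
  "ZK K a E h z = {x. (DK K a E h z has_derivative (\<lambda>_. 0)) (at x)}"

end

theory Submission imports Defs begin

lemma infdist_hyp:
  fixes hh :: "real^'m"
  assumes "norm hh = 1"
  shows "infdist p (hyperplane hh c) = \<bar>hh \<bullet> p - c\<bar>"
proof (rule antisym)
  let ?y = "p - (hh \<bullet> p - c) *\<^sub>R hh"
  have hh: "hh \<bullet> hh = 1" using assms by (simp add: power2_norm_eq_inner[symmetric])
  have "?y \<in> hyperplane hh c" using hh by (simp add: hyperplane_def inner_diff_right)
  then have "infdist p (hyperplane hh c) \<le> dist p ?y" by (rule infdist_le)
  also have "\<dots> = \<bar>hh \<bullet> p - c\<bar>" using assms by (simp add: dist_norm)
  finally show "infdist p (hyperplane hh c) \<le> \<bar>hh \<bullet> p - c\<bar>" .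
  have ne: "hyperplane hh c \<noteq> {}" using \<open>?y \<in> _\<close> by auto
  show "\<bar>hh \<bullet> p - c\<bar> \<le> infdist p (hyperplane hh c)"
    unfolding infdist_notempty[OF ne]
  proof (rule cINF_greatest[OF ne])
    fix y assume "y \<in> hyperplane hh c"
    then have "hh \<bullet> p - c = hh \<bullet> (p - y)" by (simp add: hyperplane_def inner_diff_right)
    also have "\<bar>\<dots>\<bar> \<le> norm hh * norm (p - y)" by (rule Cauchy_Schwarz_ineq2)
    finally show "\<bar>hh \<bullet> p - c\<bar> \<le> dist p y" using assms by (simp add: dist_norm)
  qed
qed

definition F :: "real \<Rightarrow> ('n::finite \<Rightarrow> 'n \<Rightarrow> real) \<Rightarrow> ('n \<times> 'n) set
    \<Rightarrow> ('n \<Rightarrow> real^'m) \<Rightarrow> ('n \<Rightarrow> real) \<Rightarrow> real^'m^'n \<Rightarrow> real" where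
  "F K a E h z x = (1/2) * (\<Sum>i\<in>UNIV. (h i \<bullet> x $ i - z i)\<^sup>2)
     + (K/2) * ((1/2) * (\<Sum>(i,j)\<in>E. a i j * ((x $ j - x $ i) \<bullet> (x $ j - x $ i))))"

definition G :: "real \<Rightarrow> ('n::finite \<Rightarrow> 'n \<Rightarrow> real) \<Rightarrow> ('n \<times> 'n) set
    \<Rightarrow> ('n \<Rightarrow> real^'m) \<Rightarrow> ('n \<Rightarrow> real) \<Rightarrow> real^'m^'n \<Rightarrow> real^'m^'n \<Rightarrow> real" where
  "G K a E h z x v = (\<Sum>i\<in>UNIV. (h i \<bullet> x $ i - z i) * (h i \<bullet> v $ i))
     + (K/2) * (\<Sum>(i,j)\<in>E. a i j * ((x $ j - x $ i) \<bullet> (v $ j - v $ i)))"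

definition Q :: "real \<Rightarrow> ('n::finite \<Rightarrow> 'n \<Rightarrow> real) \<Rightarrow> ('n \<times> 'n) set
    \<Rightarrow> ('n \<Rightarrow> real^'m) \<Rightarrow> real^'m^'n \<Rightarrow> real" where
  "Q K a E h v = (\<Sum>i\<in>UNIV. (h i \<bullet> v $ i)\<^sup>2)
     + (K/2) * (\<Sum>(i,j)\<in>E. a i j * ((v $ j - v $ i) \<bullet> (v $ j - v $ i)))"

lemma DK_F: assumes "\<And>i. norm (h i) = 1" shows "DK K a E h z = F K a E h z"
  by (rule ext) (simp add: DK_def F_def infdist_hyp[OF assms] power2_norm_eq_inner)

lemma F_expand: "F K a E h z (x + v) = F K a E h z x + G K a E h z x v + Q K a E h v / 2"
proof -
  have 1: "(h i \<bullet> (x + v) $ i - z i)\<^sup>2 = (h i \<bullet> x $ i - z i)\<^sup>2 + 2 * ((h i \<bullet> x $ i - z i) * (h i \<bullet> v $ i)) + (h i \<bullet> v $ i)\<^sup>2" for i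
    by (simp add: inner_add_right power2_eq_square algebra_simps)
  have 2: "a i j * (((x+v) $ j - (x+v) $ i) \<bullet> ((x+v) $ j - (x+v) $ i)) =
     a i j * ((x $ j - x $ i) \<bullet> (x $ j - x $ i)) + 2 * (a i j * ((x $ j - x $ i) \<bullet> (v $ j - v $ i)))
     + a i j * ((v $ j - v $ i) \<bullet> (v $ j - v $ i))" for i j
    by (simp add: inner_add_right inner_add_left inner_diff_left inner_diff_right inner_commute algebra_simps)
  show ?thesis
    unfolding F_def G_def Q_def 1 sum.distrib case_prod_beta 2 sum_distrib_left[symmetric]
    by (simp add: algebra_simps)
qed

lemma F_deriv: "(F K a E h z has_derivative G K a E h z x) (at x)"
  unfolding F_def[abs_def] G_def[abs_def] case_prod_beta
  apply (rule has_derivative_eq_rhs)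
   apply ((rule derivative_intros bounded_linear_imp_has_derivative[OF bounded_linear_vec_nth])+)[1]
  apply (rule ext)
  apply (simp add: sum_distrib_left inner_diff_left inner_diff_right inner_commute algebra_simps sum.distrib)
  done


lemma Q_F0: "Q K a E h v = 2 * F K a E h (\<lambda>_. 0) v"
  by (simp add: Q_def F_def case_prod_beta power2_eq_square)

lemma Q_cont: "continuous_on S (Q K a E h)"
proof -
  have "continuous_on S (F K a E h (\<lambda>_. 0))"
    by (intro continuous_at_imp_continuous_on ballI has_derivative_continuous[OF F_deriv])
  then have "continuous_on S (\<lambda>v. 2 * F K a E h (\<lambda>_. 0) v)" by (rule continuous_on_mult_left)
  moreover have "Q K a E h = (\<lambda>v. 2 * F K a E h (\<lambda>_. 0) v)" by (rule ext) (rule Q_F0)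
  ultimately show ?thesis by simp
qed

lemma edge_nonneg:
  fixes f :: "'n \<Rightarrow> 'n \<Rightarrow> real^'m"
  assumes "\<And>i j. (i, j) \<in> E \<Longrightarrow> a i j > 0"
  shows "0 \<le> (\<Sum>(i,j)\<in>E. a i j * (f i j \<bullet> f i j))"
proof (rule sum_nonneg)
  fix p assume "p \<in> E"
  then have "a (fst p) (snd p) > 0" using assms[of "fst p" "snd p"] by simp
  then show "0 \<le> (case p of (i, j) \<Rightarrow> a i j * (f i j \<bullet> f i j))"
    by (simp add: case_prod_beta)
qed

lemma Q_nonneg: assumes "\<And>i j. (i, j) \<in> E \<Longrightarrow> a i j > 0" "K \<ge> 0"
  shows "Q K a E h v \<ge> 0"
proof -
  have "0 \<le> (\<Sum>(i,j)\<in>E. a i j * ((v $ j - v $ i) \<bullet> (v $ j - v $ i)))"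
    by (rule edge_nonneg) (rule assms(1))
  moreover have "0 \<le> (\<Sum>i\<in>UNIV. (h i \<bullet> v $ i)\<^sup>2)" by (auto intro: sum_nonneg)
  ultimately show ?thesis unfolding Q_def using assms(2) by simp
qed

lemma Q_scale: "Q K a E h (c *\<^sub>R v) = c\<^sup>2 * Q K a E h v"
proof -
  have 1: "(h i \<bullet> (c *\<^sub>R v) $ i)\<^sup>2 = c\<^sup>2 * (h i \<bullet> v $ i)\<^sup>2" for i
    by (simp add: power_mult_distrib)
  have 2: "a i j * (((c *\<^sub>R v) $ j - (c *\<^sub>R v) $ i) \<bullet> ((c *\<^sub>R v) $ j - (c *\<^sub>R v) $ i))
     = c\<^sup>2 * (a i j * ((v $ j - v $ i) \<bullet> (v $ j - v $ i)))" for i j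
  proof -
    have "(c *\<^sub>R v) $ j - (c *\<^sub>R v) $ i = c *\<^sub>R (v $ j - v $ i)" by (simp add: scaleR_diff_right)
    then show ?thesis by (simp add: power2_eq_square)
  qed
  show ?thesis
    unfolding Q_def case_prod_beta 1 2 sum_distrib_left[symmetric] by (simp add: algebra_simps)
qed

lemma Q_mono: assumes "\<And>i j. (i, j) \<in> E \<Longrightarrow> a i j > 0" "K \<le> K'"
  shows "Q K a E h v \<le> Q K' a E h v"
proof -
  have "0 \<le> (\<Sum>(i,j)\<in>E. a i j * ((v $ j - v $ i) \<bullet> (v $ j - v $ i)))"
    by (rule edge_nonneg) (rule assms(1))
  then show ?thesis unfolding Q_def using assms(2) by (intro add_left_mono mult_right_mono) auto
qed

lemma F_mono: assumes "\<And>i j. (i, j) \<in> E \<Longrightarrow> a i j > 0" "K \<le> K'"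
  shows "F K a E h z x \<le> F K' a E h z x"
proof -
  have "0 \<le> (\<Sum>(i,j)\<in>E. a i j * ((x $ j - x $ i) \<bullet> (x $ j - x $ i)))"
    by (rule edge_nonneg) (rule assms(1))
  then show ?thesis unfolding F_def using assms(2) by (intro add_left_mono mult_right_mono) auto
qed

lemma Q_zero:
  fixes h :: "'n::finite \<Rightarrow> real^'m"
  assumes pos: "\<And>i j. (i, j) \<in> E \<Longrightarrow> a i j > 0" and K: "K > 0"
    and conn: "\<And>i j. (i, j) \<in> E\<^sup>*"
    and rk: "rank ((\<chi> i. h i) :: real^'m^'n) = CARD('m)"
    and Q0: "Q K a E h v = 0"
  shows "v = 0"
proof -
  have fin: "finite E" by (rule finite)
  have S1: "0 \<le> (\<Sum>i\<in>UNIV. (h i \<bullet> v $ i)\<^sup>2)" by (auto intro: sum_nonneg)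
  have S2: "0 \<le> (\<Sum>(i,j)\<in>E. a i j * ((v $ j - v $ i) \<bullet> (v $ j - v $ i)))"
    by (rule edge_nonneg) (rule pos)
  have e1: "(\<Sum>i\<in>UNIV. (h i \<bullet> v $ i)\<^sup>2) = 0" and
       e2: "(\<Sum>(i,j)\<in>E. a i j * ((v $ j - v $ i) \<bullet> (v $ j - v $ i))) = 0"
  proof -
    have "0 \<le> K/2 * (\<Sum>(i,j)\<in>E. a i j * ((v $ j - v $ i) \<bullet> (v $ j - v $ i)))"
      using S2 K by simp
    then show "(\<Sum>i\<in>UNIV. (h i \<bullet> v $ i)\<^sup>2) = 0" using Q0 S1 unfolding Q_def by linarith
    then show "(\<Sum>(i,j)\<in>E. a i j * ((v $ j - v $ i) \<bullet> (v $ j - v $ i))) = 0"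
      using Q0 K unfolding Q_def by simp
  qed
  have hv: "h i \<bullet> v $ i = 0" for i
    using e1 sum_nonneg_eq_0_iff[of UNIV "\<lambda>i. (h i \<bullet> v $ i)\<^sup>2"] by auto
  have edge: "v $ i = v $ j" if ij: "(i, j) \<in> E" for i j
  proof -
    have nn: "\<forall>p\<in>E. 0 \<le> (\<lambda>(i,j). a i j * ((v $ j - v $ i) \<bullet> (v $ j - v $ i))) p"
    proof
      fix p assume "p \<in> E"
      then have "a (fst p) (snd p) > 0" using pos[of "fst p" "snd p"] by simp
      then show "0 \<le> (\<lambda>(i,j). a i j * ((v $ j - v $ i) \<bullet> (v $ j - v $ i))) p"
        by (simp add: case_prod_beta)
    qed
    have "(\<lambda>(i,j). a i j * ((v $ j - v $ i) \<bullet> (v $ j - v $ i))) (i, j) = 0"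
      using e2 sum_nonneg_eq_0_iff[OF fin, of "\<lambda>(i,j). a i j * ((v $ j - v $ i) \<bullet> (v $ j - v $ i))"]
        ij nn by blast
    then show ?thesis using pos[OF ij] by simp
  qed
  have eq: "v $ i = v $ j" for i j
    using conn[of i j]
  proof (induction rule: rtrancl_induct)
    case base then show ?case by (rule refl)
  next
    case (step y z) then show ?case using edge[of y z] by simp
  qed
  fix k
  define w where "w = v $ k"
  have hw: "h i \<bullet> w = 0" for i using hv[of i] eq[of i k] by (simp add: w_def)
  have "(((\<chi> i. h i) :: real^'m^'n) *v w) $ i = h i \<bullet> w" for i
    by (simp add: matrix_vector_mult_def inner_vec_def)
  then have "((\<chi> i. h i) :: real^'m^'n) *v w = 0"
    using hw by (simp add: vec_eq_iff)
  moreover have "((\<chi> i. h i) :: real^'m^'n) *v 0 = 0" by simp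
  ultimately have w0: "w = 0" using rk[unfolded full_rank_injective] by (metis injD)
  have "v $ i = 0" for i using eq[of i k] w0 by (simp add: w_def)
  then show ?thesis by (simp add: vec_eq_iff)
qed

lemma Q_coercive:
  fixes h :: "'n::finite \<Rightarrow> real^'m"
  assumes pos: "\<And>i j. (i, j) \<in> E \<Longrightarrow> a i j > 0" and K: "K > 0"
    and conn: "\<And>i j. (i, j) \<in> E\<^sup>*"
    and rk: "rank ((\<chi> i. h i) :: real^'m^'n) = CARD('m)"
  shows "\<exists>\<mu>>0. \<forall>v. \<mu> * (norm v)\<^sup>2 \<le> Q K a E h v"
proof -
  obtain u :: "real^'m^'n" where u: "norm u = 1" using vector_choose_size[of 1] by auto
  have "\<exists>v0\<in>sphere 0 1. \<forall>v\<in>sphere 0 1. Q K a E h v0 \<le> Q K a E h v"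
    using u by (intro continuous_attains_inf compact_sphere Q_cont) auto
  then obtain v0 :: "real^'m^'n" where v0: "norm v0 = 1" and min: "\<And>v. norm v = 1 \<Longrightarrow> Q K a E h v0 \<le> Q K a E h v"
    by auto
  have "v0 \<noteq> 0" using v0 by auto
  then have "Q K a E h v0 \<noteq> 0" using Q_zero[of E a K h, OF pos K conn rk] by blast
  moreover have "Q K a E h v0 \<ge> 0" using Q_nonneg[of E a K h v0] pos K by simp
  ultimately have mpos: "Q K a E h v0 > 0" by linarith
  have "Q K a E h v0 * (norm v)\<^sup>2 \<le> Q K a E h v" for v
  proof (cases "v = 0")
    case True then show ?thesis using Q_nonneg[of E a K h 0] pos K by simp
  next
    case False
    have "v = norm v *\<^sub>R (inverse (norm v) *\<^sub>R v)" using False by simp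
    then have "Q K a E h v = (norm v)\<^sup>2 * Q K a E h (inverse (norm v) *\<^sub>R v)"
      by (metis Q_scale)
    moreover have "Q K a E h v0 \<le> Q K a E h (inverse (norm v) *\<^sub>R v)"
      using False by (intro min) simp
    ultimately show ?thesis by (simp add: mult.commute mult_left_mono)
  qed
  then show ?thesis using mpos by blast
qed

lemma G0_bound: "\<bar>G K a E h z 0 v\<bar> \<le> (\<Sum>i\<in>UNIV. \<bar>z i\<bar>) * norm v" if "\<And>i. norm (h i) = 1"
proof -
  have "G K a E h z 0 v = - (\<Sum>i\<in>UNIV. z i * (h i \<bullet> v $ i))"
    by (simp add: G_def sum_negf)
  then have "\<bar>G K a E h z 0 v\<bar> \<le> (\<Sum>i\<in>UNIV. \<bar>z i * (h i \<bullet> v $ i)\<bar>)"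
    by (simp add: sum_abs)
  also have "\<dots> \<le> (\<Sum>i\<in>UNIV. \<bar>z i\<bar> * norm v)"
  proof (rule sum_mono)
    fix i
    have "\<bar>h i \<bullet> v $ i\<bar> \<le> norm (h i) * norm (v $ i)" by (rule Cauchy_Schwarz_ineq2)
    also have "\<dots> \<le> norm v" using that Finite_Cartesian_Product.norm_nth_le[of v i] by simp
    finally show "\<bar>z i * (h i \<bullet> v $ i)\<bar> \<le> \<bar>z i\<bar> * norm v"
      by (simp add: abs_mult mult_left_mono)
  qed
  finally show ?thesis by (simp add: sum_distrib_right)
qed

lemma ZK_iff:
  assumes "\<And>i. norm (h i) = 1"
  shows "x \<in> ZK K a E h z \<longleftrightarrow> G K a E h z x = (\<lambda>_. 0)"
proof
  assume "x \<in> ZK K a E h z"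
  then have "(F K a E h z has_derivative (\<lambda>_. 0)) (at x)" unfolding ZK_def DK_F[OF assms] by simp
  then show "G K a E h z x = (\<lambda>_. 0)" by (rule has_derivative_unique[OF F_deriv])
next
  assume "G K a E h z x = (\<lambda>_. 0)"
  then have "(F K a E h z has_derivative (\<lambda>_. 0)) (at x)" using F_deriv[of K a E h z x] by simp
  then show "x \<in> ZK K a E h z" unfolding ZK_def DK_F[OF assms] by simp
qed

lemma crit_min:
  assumes "G K a E h z x = (\<lambda>_. 0)"
  shows "F K a E h z y = F K a E h z x + Q K a E h (y - x) / 2"
  using F_expand[of K a E h z x "y - x"] assms by simp

lemma F_lower:
  assumes "\<And>i. norm (h i) = 1" "\<And>v. \<mu> * (norm v)\<^sup>2 \<le> Q K a E h v"
  shows "F K a E h z 0 - (\<Sum>i\<in>UNIV. \<bar>z i\<bar>) * norm x + \<mu> / 2 * (norm x)\<^sup>2 \<le> F K a E h z x"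
  using F_expand[of K a E h z 0 x] G0_bound[of h K a E z x] assms(1) assms(2)[of x] by simp


lemma norm_bound_aux:
  fixes n B \<mu> :: real
  assumes "\<mu> > 0" "n \<ge> 0" "B \<ge> 0" "\<mu> / 2 * n\<^sup>2 \<le> B * n"
  shows "n \<le> 2 * B / \<mu>"
proof (cases "n = 0")
  case True
  then show ?thesis using assms by (simp add: divide_nonneg_pos)
next
  case False
  then have "\<mu> / 2 * n \<le> B" using assms by (simp add: power2_eq_square)
  then show ?thesis using assms by (simp add: field_simps)
qed

theorem mainTheorem12:
  fixes E :: "('n::finite \<times> 'n) set"
    and a :: "'n \<Rightarrow> 'n \<Rightarrow> real"
    and h :: "'n \<Rightarrow> real^'m"
    and z :: "'n \<Rightarrow> real"
  assumes bidir: "\<And>i j. (i, j) \<in> E \<longleftrightarrow> (j, i) \<in> E"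
    and connected: "\<And>i j. (i, j) \<in> E\<^sup>*"
    and weights_sym: "\<And>i j. (i, j) \<in> E \<Longrightarrow> a i j = a j i"
    and weights_pos: "\<And>i j. (i, j) \<in> E \<Longrightarrow> a i j > 0"
    and unit_rows: "\<And>i. norm (h i) = 1"
    and full_rank: "rank ((\<chi> i. h i) :: real^'m^'n) = CARD('m)"
  shows "(\<forall>K>0. \<exists>!x. x \<in> ZK K a E h z)
       \<and> (\<forall>\<kappa>0>0. bounded (\<Union>K\<in>{\<kappa>0<..}. ZK K a E h z))"
proof -
  define B where "B = (\<Sum>i\<in>UNIV. \<bar>z i\<bar>)"
  have B0: "B \<ge> 0" unfolding B_def by (auto intro: sum_nonneg)
  have ZK: "x \<in> ZK K a E h z \<longleftrightarrow> G K a E h z x = (\<lambda>_. 0)" for K x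
    using ZK_iff[of h x K a E z] unit_rows by blast
  have uniq: "x = y" if K: "K > 0" and x: "x \<in> ZK K a E h z" and y: "y \<in> ZK K a E h z" for K x y
  proof -
    have 1: "F K a E h z y = F K a E h z x + Q K a E h (y - x) / 2"
      using crit_min x ZK by blast
    have 2: "F K a E h z x = F K a E h z y + Q K a E h (x - y) / 2"
      using crit_min y ZK by blast
    have "x - y = (-1) *\<^sub>R (y - x)" by simp
    then have "Q K a E h (x - y) = Q K a E h (y - x)" using Q_scale[of K a E h "-1" "y - x"] by simp
    then have "Q K a E h (y - x) = 0" using 1 2 by simp
    then have "y - x = 0" using Q_zero[of E a K h "y - x"] weights_pos K connected full_rank by blast
    then show ?thesis by simp
  qed
  have exist: "\<exists>x. x \<in> ZK K a E h z" if K: "K > 0" for K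
  proof -
    obtain \<mu> where mu: "\<mu> > 0" "\<And>v. \<mu> * (norm v)\<^sup>2 \<le> Q K a E h v"
      using Q_coercive[of E a K h] weights_pos K connected full_rank by blast
    define R where "R = 2 * B / \<mu> + 1"
    have R0: "R > 0" unfolding R_def using B0 mu by (simp add: divide_nonneg_pos add_nonneg_pos)
    have cont: "continuous_on (cball 0 R) (F K a E h z)"
      by (intro continuous_at_imp_continuous_on ballI has_derivative_continuous[OF F_deriv])
    obtain x0 where x0: "x0 \<in> cball 0 R" "\<And>y. y \<in> cball 0 R \<Longrightarrow> F K a E h z x0 \<le> F K a E h z y"
    proof -
      have "cball (0::real^'m^'n) R \<noteq> {}" using R0 by simp
      then show ?thesis using continuous_attains_inf[OF compact_cball _ cont] that by blast
    qed
    have glob: "F K a E h z x0 \<le> F K a E h z y" for y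
    proof (cases "y \<in> cball 0 R")
      case True then show ?thesis using x0 by blast
    next
      case False
      then have ny: "norm y > R" by simp
      have lo: "F K a E h z 0 - B * norm y + \<mu> / 2 * (norm y)\<^sup>2 \<le> F K a E h z y"
        using F_lower[of h \<mu> K a E z y] unit_rows mu(2) by (simp add: B_def)
      have "2 * B / \<mu> \<le> norm y" using ny R_def by simp
      then have "2 * B \<le> \<mu> * norm y" using mu by (simp add: field_simps)
      then have "B * norm y \<le> \<mu> / 2 * (norm y)\<^sup>2"
        using mult_right_mono[of "2*B" "\<mu> * norm y" "norm y"]
        by (simp add: power2_eq_square algebra_simps)
      moreover have "F K a E h z x0 \<le> F K a E h z 0" using x0(2)[of 0] R0 by simp
      ultimately show ?thesis using lo by linarith
    qed
    have "G K a E h z x0 = (\<lambda>_. 0)"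
      by (rule has_derivative_local_min[OF F_deriv]) (simp add: glob always_eventually)
    then show ?thesis using ZK by blast
  qed
  have part1: "\<exists>!x. x \<in> ZK K a E h z" if K: "K > 0" for K
  proof -
    obtain x where x: "x \<in> ZK K a E h z" using exist[OF K] by blast
    show ?thesis
    proof (rule ex1I[of _ x])
      show "x \<in> ZK K a E h z" by (rule x)
      fix y assume "y \<in> ZK K a E h z"
      then show "y = x" using uniq[OF K] x by blast
    qed
  qed
  have part2: "bounded (\<Union>K\<in>{\<kappa>0<..}. ZK K a E h z)" if k0: "\<kappa>0 > 0" for \<kappa>0
  proof -
    obtain \<mu> where mu: "\<mu> > 0" "\<And>v. \<mu> * (norm v)\<^sup>2 \<le> Q \<kappa>0 a E h v"
      using Q_coercive[of E a \<kappa>0 h] weights_pos k0 connected full_rank by blast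
    have "(\<Union>K\<in>{\<kappa>0<..}. ZK K a E h z) \<subseteq> cball 0 (2 * B / \<mu>)"
    proof
      fix x assume "x \<in> (\<Union>K\<in>{\<kappa>0<..}. ZK K a E h z)"
      then obtain K where K: "K > \<kappa>0" and x: "x \<in> ZK K a E h z" by auto
      have "F K a E h z 0 = F K a E h z x + Q K a E h (0 - x) / 2"
        using crit_min x ZK by blast
      moreover have "Q K a E h (0 - x) \<ge> 0" using Q_nonneg[of E a K h] weights_pos K k0 by simp
      ultimately have 1: "F K a E h z x \<le> F K a E h z 0" by linarith
      have 2: "F K a E h z 0 = F \<kappa>0 a E h z 0" by (simp add: F_def)
      have 3: "F \<kappa>0 a E h z x \<le> F K a E h z x" using F_mono[of E a \<kappa>0 K h z x] weights_pos K by simp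
      have 4: "F \<kappa>0 a E h z 0 - B * norm x + \<mu> / 2 * (norm x)\<^sup>2 \<le> F \<kappa>0 a E h z x"
        using F_lower[of h \<mu> \<kappa>0 a E z x] unit_rows mu(2) by (simp add: B_def)
      have "\<mu> / 2 * (norm x)\<^sup>2 \<le> B * norm x" using 1 2 3 4 by linarith
      then have "norm x \<le> 2 * B / \<mu>" by (rule norm_bound_aux[OF mu(1) norm_ge_zero B0])
      then show "x \<in> cball 0 (2 * B / \<mu>)" by simp
    qed
    then show ?thesis by (rule bounded_subset[OF bounded_cball])
  qed
  show ?thesis by (intro conjI allI impI part1 part2)
qed

end
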